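(* Both sets $$\{\alpha(W')\alpha(W'')(\mathbf I)\mid W'\in\mathcal W^0(\mathfrak X^{(1)}_{1\otimes2}),\ W''\in\mathcal W^0(\mathfrak X^{(2)}_{1\otimes2})\}$$ and $$\{\alpha(W')\alpha(W'')(\mathbf I)\mid W'\in\mathcal W^0(\mathfrak X^{(2)}_{2\otimes1}),\ W''\in\mathcal W^0(\mathfrak X^{(1)}_{2\otimes1})\}$$ are linearly independent subsets of $\mathcal U(\mathfrak X)$ (distinct pairs $(W',W'')$ giving linearly independent elements).
   Context: $\mathfrak X$ is the complex Lie algebra generated by $Z_1,Z_{11},Z_2,Z_{22},Z_{12}$ subject only to $[Z_1,Z_2]=[Z_{11},Z_2]=[Z_1,Z_{22}]=0$ and $[Z_{11},Z_{22}]=-[Z_{11},Z_{12}]=[Z_{22},Z_{12}]=-[Z_1-Z_2,Z_{12}]$; $\mathcal U(\mathfrak X)$ is its universal enveloping algebra with unit $\mathbf I$. $\mathfrak X^{(1)}_{1\otimes2},\mathfrak X^{(2)}_{1\otimes2},\mathfrak X^{(2)}_{2\otimes1},\mathfrak X^{(1)}_{2\otimes1}$ are the Lie subalgebras generated by $\{Z_1,Z_{11},Z_{12}\},\{Z_2,Z_{22}\},\{Z_2,Z_{22},Z_{12}\},\{Z_1,Z_{11}\}$; $\mathcal W^0(\mathfrak A)$ is the set of words (noncommutative monomials, including the empty word) in the generators of $\mathfrak A$ not ending with $Z_1$ or $Z_2$. For a word $W$, $\alpha(W)\in\mathrm{End}(\mathcal U(\mathfrak X))$ is the composition, in the order of the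 letters, of the operators $Z_1\mapsto\mathrm{ad}(Z_1)$, $Z_2\mapsto\mathrm{ad}(Z_2)$, $Z_{11}\mapsto\mu(Z_{11})$, $Z_{22}\mapsto\mu(Z_{22})$, $Z_{12}\mapsto\mu(Z_{12})$, where $\mathrm{ad}(X)F=[X,F]$ and $\mu(X)F=XF$. *)

theory Defs
  imports Complex_Main
begin

datatype gen = Z1 | Z11 | Z2 | Z22 | Z12

text \<open>Elements of the free associative algebra C<Z1,Z11,Z2,Z22,Z12> (= tensor algebra),
  represented by their coefficient function on words; only finitely supported
  functions arise below.\<close>
type_synonym fa = "gen list \<Rightarrow> complex"

definition fa_zero :: fa where "fa_zero = (\<lambda>w. 0)"
definition fa_one :: fa where "fa_one = (\<lambda>w. if w = [] then 1 else 0)"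
definition fa_mono :: "gen list \<Rightarrow> fa" where "fa_mono u = (\<lambda>w. if w = u then 1 else 0)"
definition fa_gen :: "gen \<Rightarrow> fa" where "fa_gen g = fa_mono [g]"
definition fa_add :: "fa \<Rightarrow> fa \<Rightarrow> fa" where "fa_add p q = (\<lambda>w. p w + q w)"
definition fa_sub :: "fa \<Rightarrow> fa \<Rightarrow> fa" where "fa_sub p q = (\<lambda>w. p w - q w)"
definition fa_smult :: "complex \<Rightarrow> fa \<Rightarrow> fa" where "fa_smult c p = (\<lambda>w. c * p w)"
definition fa_mult :: "fa \<Rightarrow> fa \<Rightarrow> fa" where
  "fa_mult p q = (\<lambda>w. \<Sum>i\<le>length w. p (take i w) * q (drop i w))"
definition fa_comm :: "fa \<Rightarrow> fa \<Rightarrow> fa" where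
  "fa_comm a b = fa_sub (fa_mult a b) (fa_mult b a)"

text \<open>Defining relations of X, written as associative commutators.\<close>
definition X_rels :: "fa set" where
  "X_rels = {
     fa_comm (fa_gen Z1) (fa_gen Z2),
     fa_comm (fa_gen Z11) (fa_gen Z2),
     fa_comm (fa_gen Z1) (fa_gen Z22),
     fa_add (fa_comm (fa_gen Z11) (fa_gen Z22)) (fa_comm (fa_gen Z11) (fa_gen Z12)),
     fa_add (fa_comm (fa_gen Z11) (fa_gen Z22)) (fa_comm (fa_sub (fa_gen Z1) (fa_gen Z2)) (fa_gen Z12)),
     fa_add (fa_comm (fa_gen Z22) (fa_gen Z12)) (fa_comm (fa_sub (fa_gen Z1) (fa_gen Z2)) (fa_gen Z12))}"

text \<open>Two-sided ideal of the free associative algebra generated by the relations;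
  U(X) is the quotient of the free algebra by this ideal.\<close>
inductive_set X_ideal :: "fa set" where
  rel: "r \<in> X_rels \<Longrightarrow> r \<in> X_ideal"
| zero: "fa_zero \<in> X_ideal"
| add: "a \<in> X_ideal \<Longrightarrow> b \<in> X_ideal \<Longrightarrow> fa_add a b \<in> X_ideal"
| smult: "a \<in> X_ideal \<Longrightarrow> fa_smult c a \<in> X_ideal"
| lmult: "a \<in> X_ideal \<Longrightarrow> fa_mult (fa_mono u) a \<in> X_ideal"
| rmult: "a \<in> X_ideal \<Longrightarrow> fa_mult a (fa_mono u) \<in> X_ideal"

fun alpha_gen :: "gen \<Rightarrow> fa \<Rightarrow> fa" where
  "alpha_gen Z1 F = fa_comm (fa_gen Z1) F"
| "alpha_gen Z2 F = fa_comm (fa_gen Z2) F"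
| "alpha_gen Z11 F = fa_mult (fa_gen Z11) F"
| "alpha_gen Z22 F = fa_mult (fa_gen Z22) F"
| "alpha_gen Z12 F = fa_mult (fa_gen Z12) F"

fun alpha :: "gen list \<Rightarrow> fa \<Rightarrow> fa" where
  "alpha [] F = F"
| "alpha (g # W) F = alpha_gen g (alpha W F)"

definition W0 :: "gen set \<Rightarrow> gen list set" where
  "W0 G = {w. set w \<subseteq> G \<and> (w \<noteq> [] \<longrightarrow> last w \<notin> {Z1, Z2})}"

definition lin_indep_U :: "'i set \<Rightarrow> ('i \<Rightarrow> fa) \<Rightarrow> bool" where
  "lin_indep_U J f \<longleftrightarrow>
     (\<forall>S c. finite S \<longrightarrow> S \<subseteq> J \<longrightarrow> (\<lambda>w. \<Sum>p\<in>S. c p * f p w) \<in> X_ideal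
        \<longrightarrow> (\<forall>p\<in>S. c p = 0))"

definition elemU :: "gen list \<times> gen list \<Rightarrow> fa" where
  "elemU p = alpha (fst p) (alpha (snd p) fa_one)"

end

theory Submission
  imports Defs "HOL-Library.List_Lexorder"
begin


lemma fa_mult_mono_left:
  "fa_mult (fa_mono u) F w = (if take (length u) w = u then F (drop (length u) w) else 0)"
proof -
  have "fa_mult (fa_mono u) F w = (\<Sum>i\<le>length w. if i = length u then (if take (length u) w = u then F (drop (length u) w) else 0) else 0)"
    unfolding fa_mult_def fa_mono_def by (rule sum.cong) auto
  also have "\<dots> = (if take (length u) w = u then F (drop (length u) w) else 0)"
    by (auto simp: sum.delta dest: arg_cong[where f=length])
  finally show ?thesis .
qed

lemma fa_mult_mono_right:
  "fa_mult F (fa_mono u) w = (if length u \<le> length w \<and> drop (length w - length u) w = u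
      then F (take (length w - length u) w) else 0)"
proof -
  have "fa_mult F (fa_mono u) w = (\<Sum>i\<le>length w. if i = length w - length u then
        (if length u \<le> length w \<and> drop (length w - length u) w = u then F (take (length w - length u) w) else 0) else 0)"
    unfolding fa_mult_def fa_mono_def by (rule sum.cong) auto
  also have "\<dots> = (if length u \<le> length w \<and> drop (length w - length u) w = u then F (take (length w - length u) w) else 0)"
    by (auto simp: sum.delta)
  finally show ?thesis .
qed

lemma fa_mult_assoc: "fa_mult (fa_mult p q) r = fa_mult p (fa_mult q r)"
proof
  fix w :: "gen list"
  let ?n = "length w"
  define g where "g i k = p (take i w) * q (take k (drop i w)) * r (drop (i+k) w)" for i k
  have "fa_mult (fa_mult p q) r w = (\<Sum>j\<le>?n. \<Sum>i\<le>j. g i (j - i))"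
    unfolding fa_mult_def g_def
    by (auto simp: sum_distrib_right min_def take_drop intro!: sum.cong)
  also have "\<dots> = (\<Sum>(i,k)\<in>{(i,k). i+k \<le> ?n}. g i k)"
    by (rule sum.triangle_reindex_eq[symmetric])
  also have "{(i,k). i+k \<le> ?n} = Sigma {..?n} (\<lambda>i. {..?n - i})" by auto
  also have "(\<Sum>(i,k)\<in>Sigma {..?n} (\<lambda>i. {..?n - i}). g i k) = (\<Sum>i\<le>?n. \<Sum>k\<le>?n-i. g i k)"
    by (rule sum.Sigma[symmetric]) auto
  also have "\<dots> = fa_mult p (fa_mult q r) w"
    unfolding fa_mult_def g_def
    by (auto simp: sum_distrib_left mult.assoc add.commute intro!: sum.cong)
  finally show "fa_mult (fa_mult p q) r w = fa_mult p (fa_mult q r) w" .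
qed


lemma fa_mult_one_left[simp]: "fa_mult fa_one p = p"
  using fa_mult_mono_left[of "[]" p] by (auto simp: fa_one_def fa_mono_def[symmetric] fun_eq_iff)

lemma fa_mult_one_right[simp]: "fa_mult p fa_one = p"
  using fa_mult_mono_right[of p "[]"] by (auto simp: fa_one_def fa_mono_def[symmetric] fun_eq_iff)

lemma fa_one_mono: "fa_one = fa_mono []" by (simp add: fa_one_def fa_mono_def)

lemma fa_mult_mono_mono: "fa_mult (fa_mono u) (fa_mono v) = fa_mono (u @ v)"
  by (rule ext, simp only: fa_mult_mono_left, auto simp: fa_mono_def, metis append_take_drop_id)

lemma fa_mult_sub_left: "fa_mult (fa_sub p q) r = fa_sub (fa_mult p r) (fa_mult q r)"
  by (simp add: fun_eq_iff fa_mult_def fa_sub_def algebra_simps sum_subtractf)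

lemma fa_mult_sub_right: "fa_mult r (fa_sub p q) = fa_sub (fa_mult r p) (fa_mult r q)"
  by (simp add: fun_eq_iff fa_mult_def fa_sub_def algebra_simps sum_subtractf)

definition words :: "nat \<Rightarrow> gen list set" where "words n = {w. length w = n}"

lemma UNIV_gen: "(UNIV :: gen set) = {Z1, Z11, Z2, Z22, Z12}"
  using gen.exhaust by auto

lemma finite_words[simp]: "finite (words n)"
proof -
  have "words n = {xs. set xs \<subseteq> (UNIV::gen set) \<and> length xs = n}" by (auto simp: words_def)
  then show ?thesis using finite_lists_length_eq[of "UNIV::gen set" n] by (simp add: UNIV_gen)
qed

lemma mem_words[simp]: "w \<in> words n \<longleftrightarrow> length w = n" by (simp add: words_def)


fun isA :: "gen \<Rightarrow> bool" where
  "isA Z1 = True" | "isA Z11 = True" | "isA Z12 = True" | "isA Z2 = False" | "isA Z22 = False"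

fun dco :: "gen \<Rightarrow> gen \<Rightarrow> gen \<Rightarrow> gen \<Rightarrow> complex" where
  "dco Z2 Z12 a b = (if a = Z1 \<and> b = Z12 then 1 else if a = Z12 \<and> b = Z1 then -1
      else if a = Z11 \<and> b = Z12 then -1 else if a = Z12 \<and> b = Z11 then 1 else 0)"
| "dco Z22 Z11 a b = (if a = Z11 \<and> b = Z12 then 1 else if a = Z12 \<and> b = Z11 then -1 else 0)"
| "dco Z22 Z12 a b = (if a = Z11 \<and> b = Z12 then -1 else if a = Z12 \<and> b = Z11 then 1 else 0)"
| "dco _ _ a b = 0"

definition Dt :: "gen \<Rightarrow> gen \<Rightarrow> gen list \<Rightarrow> gen list \<Rightarrow> complex" where
  "Dt y x w t = (case t of a # b # r \<Rightarrow> if r = w then dco y x a b else 0 | _ \<Rightarrow> 0)"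

fun My :: "gen \<Rightarrow> gen list \<Rightarrow> gen list \<Rightarrow> complex" where
  "My y [] t = (if t = [y] then 1 else 0)"
| "My y (x # w) t = (if isA x then Dt y x w t + (case t of [] \<Rightarrow> 0 | a # r \<Rightarrow> if a = x then My y w r else 0)
      else (if t = y # x # w then 1 else 0))"

definition Mg :: "gen \<Rightarrow> gen list \<Rightarrow> gen list \<Rightarrow> complex" where
  "Mg g w t = (if isA g then (if t = g # w then 1 else 0) else My g w t)"

lemma Dt_len: "Dt y x w t \<noteq> 0 \<Longrightarrow> length t = Suc (Suc (length w))"
  by (auto simp: Dt_def split: list.splits if_splits)

lemma My_len: "My y w t \<noteq> 0 \<Longrightarrow> length t = Suc (length w)"
proof (induction w arbitrary: t)
  case Nil then show ?case by (auto split: if_splits)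
next
  case (Cons x w)
  show ?case
  proof (cases "isA x")
    case True
    with Cons.prems have "Dt y x w t \<noteq> 0 \<or> (case t of [] \<Rightarrow> 0 | a # r \<Rightarrow> if a = x then My y w r else 0) \<noteq> 0"
      by auto
    then show ?thesis
    proof
      assume "Dt y x w t \<noteq> 0" then show ?thesis by (simp add: Dt_len)
    next
      assume "(case t of [] \<Rightarrow> 0 | a # r \<Rightarrow> if a = x then My y w r else 0) \<noteq> 0"
      then show ?thesis using Cons.IH by (auto split: list.splits if_splits)
    qed
  next
    case False with Cons.prems show ?thesis by (auto split: if_splits)
  qed
qed

lemma Mg_len: "Mg g w t \<noteq> 0 \<Longrightarrow> length t = Suc (length w)"
  by (auto simp: Mg_def split: if_splits dest: My_len)

fun coef :: "gen list \<Rightarrow> gen list \<Rightarrow> gen list \<Rightarrow> complex" where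
  "coef [] v t = (if t = v then 1 else 0)"
| "coef (g # s) v t = (\<Sum>t'\<in>words (length t - 1). Mg g t' t * coef s v t')"

lemma coef_len: "coef s v t \<noteq> 0 \<Longrightarrow> length t = length s + length v"
proof (induction s arbitrary: t)
  case Nil then show ?case by (auto split: if_splits)
next
  case (Cons g s)
  have "\<exists>t'\<in>words (length t - 1). Mg g t' t * coef s v t' \<noteq> 0"
    using Cons.prems by (metis (mono_tags, lifting) coef.simps(2) sum.neutral)
  then obtain t' where "Mg g t' t \<noteq> 0" "coef s v t' \<noteq> 0" by auto
  then show ?case using Cons.IH Mg_len by force
qed

lemma sum_delta_words: fixes f :: "gen list \<Rightarrow> complex" shows "(\<Sum>t'\<in>words n. f t' * (if t' = v then 1 else 0)) = (if length v = n then f v else 0)"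
proof -
  have "(\<Sum>t'\<in>words n. f t' * (if t' = v then 1 else 0)) = (\<Sum>t'\<in>words n. if t' = v then f v else 0)"
    by (rule sum.cong) auto
  then show ?thesis by (simp add: sum.delta')
qed

lemma sum_delta_words': fixes f :: "gen list \<Rightarrow> complex" shows "(\<Sum>t'\<in>words n. (if v = t' then 1 else 0) * f t') = (if length v = n then f v else 0)"
  using sum_delta_words[where n=n and f=f and v=v] by (simp add: mult.commute eq_commute)

lemma coef_single: "coef [g] v t = Mg g v t"
  by (cases "Mg g v t = 0") (auto simp: sum_delta_words dest: Mg_len)

lemma coef_append:
  "coef (s1 @ s2) v t = (\<Sum>t'\<in>words (length s2 + length v). coef s1 t' t * coef s2 v t')"
proof (induction s1 arbitrary: t)
  case Nil
  show ?case using coef_len[of s2 v t] by (auto simp: sum_delta_words')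
next
  case (Cons g s1)
  have "coef ((g # s1) @ s2) v t = (\<Sum>t''\<in>words (length t - 1). Mg g t'' t *
      (\<Sum>t'\<in>words (length s2 + length v). coef s1 t' t'' * coef s2 v t'))"
    by (simp add: Cons.IH)
  also have "\<dots> = (\<Sum>t''\<in>words (length t - 1). \<Sum>t'\<in>words (length s2 + length v). Mg g t'' t * coef s1 t' t'' * coef s2 v t')"
    by (simp add: sum_distrib_left mult.assoc)
  also have "\<dots> = (\<Sum>t'\<in>words (length s2 + length v). \<Sum>t''\<in>words (length t - 1). Mg g t'' t * coef s1 t' t'' * coef s2 v t')"
    by (rule sum.swap)
  also have "\<dots> = (\<Sum>t'\<in>words (length s2 + length v). coef (g # s1) t' t * coef s2 v t')"
    by (simp add: sum_distrib_right)
  finally show ?case .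
qed

definition Psi :: "fa \<Rightarrow> gen list \<Rightarrow> gen list \<Rightarrow> complex" where
  "Psi F v t = (\<Sum>s\<in>words (length t - length v). F s * coef s v t)"

lemma Psi_short: "length t < length v \<Longrightarrow> Psi F v t = 0"
proof -
  assume a: "length t < length v"
  have "words 0 = {[]}" by (auto simp: words_def)
  with a show ?thesis by (auto simp: Psi_def)
qed

lemma sum_words_prefix:
  "(\<Sum>s\<in>words n. (if take (length u) s = u then f (drop (length u) s) else 0))
     = (if length u \<le> n then (\<Sum>s0\<in>words (n - length u). f s0) else 0)"
proof (cases "length u \<le> n")
  case True
  let ?g = "\<lambda>s. if take (length u) s = u then f (drop (length u) s) else 0"
  have "(\<Sum>s\<in>words n. ?g s) = (\<Sum>s\<in>(\<lambda>s0. u @ s0) ` words (n - length u). ?g s)"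
  proof (rule sum.mono_neutral_right)
    show "(\<lambda>s0. u @ s0) ` words (n - length u) \<subseteq> words n" using True by auto
    show "\<forall>i\<in>words n - (\<lambda>s0. u @ s0) ` words (n - length u). ?g i = 0"
    proof
      fix s assume s: "s \<in> words n - (\<lambda>s0. u @ s0) ` words (n - length u)"
      show "?g s = 0"
      proof (rule ccontr)
        assume "?g s \<noteq> 0"
        then have "take (length u) s = u" by (auto split: if_splits)
        then have "s = u @ drop (length u) s" by (metis append_take_drop_id)
        moreover have "drop (length u) s \<in> words (n - length u)" using s by auto
        ultimately show False using s by blast
      qed
    qed
  qed simp
  also have "\<dots> = (\<Sum>s0\<in>words (n - length u). ?g (u @ s0))"
    by (subst sum.reindex) (auto simp: inj_on_def)
  also have "\<dots> = (\<Sum>s0\<in>words (n - length u). f s0)" by simp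
  finally show ?thesis using True by simp
next
  case False
  have "\<And>s. s \<in> words n \<Longrightarrow> take (length u) s \<noteq> u"
    using False by (auto dest: arg_cong[where f=length])
  then show ?thesis using False by simp
qed

lemma sum_words_suffix:
  "(\<Sum>s\<in>words n. (if length u \<le> length s \<and> drop (length s - length u) s = u then f (take (length s - length u) s) else 0))
     = (if length u \<le> n then (\<Sum>s0\<in>words (n - length u). f s0) else 0)"
proof (cases "length u \<le> n")
  case True
  let ?g = "\<lambda>s. if length u \<le> length s \<and> drop (length s - length u) s = u then f (take (length s - length u) s) else 0"
  have "(\<Sum>s\<in>words n. ?g s) = (\<Sum>s\<in>(\<lambda>s0. s0 @ u) ` words (n - length u). ?g s)"
  proof (rule sum.mono_neutral_right)
    show "(\<lambda>s0. s0 @ u) ` words (n - length u) \<subseteq> words n" using True by auto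
    show "\<forall>i\<in>words n - (\<lambda>s0. s0 @ u) ` words (n - length u). ?g i = 0"
    proof
      fix s assume s: "s \<in> words n - (\<lambda>s0. s0 @ u) ` words (n - length u)"
      show "?g s = 0"
      proof (rule ccontr)
        assume "?g s \<noteq> 0"
        then have "drop (length s - length u) s = u" by (auto split: if_splits)
        then have "s = take (length s - length u) s @ u" by (metis append_take_drop_id)
        moreover have "take (length s - length u) s \<in> words (n - length u)" using s by auto
        ultimately show False using s by blast
      qed
    qed
  qed simp
  also have "\<dots> = (\<Sum>s0\<in>words (n - length u). ?g (s0 @ u))"
    by (subst sum.reindex) (auto simp: inj_on_def)
  also have "\<dots> = (\<Sum>s0\<in>words (n - length u). f s0)" by simp
  finally show ?thesis using True by simp
next
  case False
  then show ?thesis by simp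
qed

lemma Psi_left:
  "Psi (fa_mult (fa_mono u) F) v t = (\<Sum>t'\<in>words (length t - length u). coef u t' t * Psi F v t')"
proof (cases "length u + length v \<le> length t")
  case True
  define m where "m = length t - length v - length u"
  have "Psi (fa_mult (fa_mono u) F) v t = (\<Sum>s\<in>words (length t - length v).
      (if take (length u) s = u then F (drop (length u) s) * coef (u @ drop (length u) s) v t else 0))"
    unfolding Psi_def fa_mult_mono_left
    by (rule sum.cong) (auto, metis append_take_drop_id)
  also have "\<dots> = (if length u \<le> length t - length v then (\<Sum>s0\<in>words (length t - length v - length u). F s0 * coef (u @ s0) v t) else 0)"
    by (rule sum_words_prefix)
  also have "\<dots> = (\<Sum>s0\<in>words m. F s0 * coef (u @ s0) v t)"
    using True by (simp add: m_def)
  also have "\<dots> = (\<Sum>s0\<in>words m. F s0 * (\<Sum>t'\<in>words (m + length v). coef u t' t * coef s0 v t'))"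
    by (rule sum.cong) (auto simp: coef_append)
  also have "\<dots> = (\<Sum>s0\<in>words m. \<Sum>t'\<in>words (m + length v). coef u t' t * (F s0 * coef s0 v t'))"
    by (simp add: sum_distrib_left algebra_simps)
  also have "\<dots> = (\<Sum>t'\<in>words (m + length v). \<Sum>s0\<in>words m. coef u t' t * (F s0 * coef s0 v t'))"
    by (rule sum.swap)
  also have "\<dots> = (\<Sum>t'\<in>words (m + length v). coef u t' t * Psi F v t')"
    by (rule sum.cong) (auto simp: Psi_def sum_distrib_left)
  also have "m + length v = length t - length u" using True by (simp add: m_def)
  finally show ?thesis .
next
  case False
  have "Psi (fa_mult (fa_mono u) F) v t = 0"
    unfolding Psi_def fa_mult_mono_left
  proof (rule sum.neutral, intro ballI)
    fix s assume s: "s \<in> words (length t - length v)"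
    show "(if take (length u) s = u then F (drop (length u) s) else 0) * coef s v t = 0"
    proof (cases "take (length u) s = u")
      case True
      then have "length u \<le> length s" by (metis nat_le_linear take_all order_refl)
      then have "coef s v t = 0" using coef_len[of s v t] s False by auto
      then show ?thesis by simp
    qed simp
  qed
  moreover have "(\<Sum>t'\<in>words (length t - length u). coef u t' t * Psi F v t') = 0"
  proof (rule sum.neutral, intro ballI)
    fix t' assume "t' \<in> words (length t - length u)"
    show "coef u t' t * Psi F v t' = 0"
    proof (cases "coef u t' t = 0")
      case False
      then have "length t = length u + length t'" by (rule coef_len)
      then have "length t' < length v" using \<open>\<not> (length u + length v \<le> length t)\<close> by auto
      then show ?thesis by (simp add: Psi_short)
    qed simp
  qed
  ultimately show ?thesis by simp
qed

lemma Psi_right: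
  "Psi (fa_mult F (fa_mono u)) v t = (\<Sum>t'\<in>words (length u + length v). coef u v t' * Psi F t' t)"
proof (cases "length u + length v \<le> length t")
  case True
  define m where "m = length t - length v - length u"
  have "Psi (fa_mult F (fa_mono u)) v t = (\<Sum>s\<in>words (length t - length v).
      (if length u \<le> length s \<and> drop (length s - length u) s = u then
         F (take (length s - length u) s) * coef (take (length s - length u) s @ u) v t else 0))"
    unfolding Psi_def fa_mult_mono_right
    by (rule sum.cong) (auto, metis append_take_drop_id)
  also have "\<dots> = (if length u \<le> length t - length v then (\<Sum>s0\<in>words (length t - length v - length u). F s0 * coef (s0 @ u) v t) else 0)"
    by (rule sum_words_suffix)
  also have "\<dots> = (\<Sum>s0\<in>words m. F s0 * coef (s0 @ u) v t)"
    using True by (simp add: m_def)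
  also have "\<dots> = (\<Sum>s0\<in>words m. F s0 * (\<Sum>t'\<in>words (length u + length v). coef s0 t' t * coef u v t'))"
    by (rule sum.cong) (auto simp: coef_append)
  also have "\<dots> = (\<Sum>s0\<in>words m. \<Sum>t'\<in>words (length u + length v). coef u v t' * (F s0 * coef s0 t' t))"
    by (simp add: sum_distrib_left algebra_simps)
  also have "\<dots> = (\<Sum>t'\<in>words (length u + length v). \<Sum>s0\<in>words m. coef u v t' * (F s0 * coef s0 t' t))"
    by (rule sum.swap)
  also have "\<dots> = (\<Sum>t'\<in>words (length u + length v). coef u v t' * Psi F t' t)"
    using True by (intro sum.cong) (auto simp: Psi_def sum_distrib_left m_def add.commute)
  finally show ?thesis .
next
  case False
  have "Psi (fa_mult F (fa_mono u)) v t = 0"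
    unfolding Psi_def fa_mult_mono_right
  proof (rule sum.neutral, intro ballI)
    fix s assume s: "s \<in> words (length t - length v)"
    show "(if length u \<le> length s \<and> drop (length s - length u) s = u then F (take (length s - length u) s) else 0) * coef s v t = 0"
    proof (cases "length u \<le> length s")
      case True
      then have "coef s v t = 0" using coef_len[of s v t] s False by auto
      then show ?thesis by simp
    qed simp
  qed
  moreover have "(\<Sum>t'\<in>words (length u + length v). coef u v t' * Psi F t' t) = 0"
    using False by (intro sum.neutral) (auto simp: Psi_short)
  ultimately show ?thesis by simp
qed

lemma Psi_sub: "Psi (fa_sub p q) v t = Psi p v t - Psi q v t"
  by (simp add: Psi_def fa_sub_def algebra_simps sum_subtractf)
lemma Psi_add: "Psi (fa_add p q) v t = Psi p v t + Psi q v t"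
  by (simp add: Psi_def fa_add_def algebra_simps sum.distrib)
lemma Psi_smult: "Psi (fa_smult c p) v t = c * Psi p v t"
  by (simp add: Psi_def fa_smult_def sum_distrib_left mult.assoc)
lemma Psi_zero: "Psi fa_zero v t = 0"
  by (simp add: Psi_def fa_zero_def)
lemma Psi_lincomb: "Psi (\<lambda>w. \<Sum>p\<in>S. c p * f p w) v t = (\<Sum>p\<in>S. c p * Psi (f p) v t)"
  unfolding Psi_def by (simp add: sum_distrib_right sum_distrib_left mult.assoc) (rule sum.swap)

lemma Psi_mono: "Psi (fa_mono u) v t = coef u v t"
proof -
  have "Psi (fa_mono u) v t = (\<Sum>s\<in>words (length t - length v). if s = u then coef u v t else 0)"
    unfolding Psi_def fa_mono_def by (rule sum.cong) auto
  then show ?thesis by (cases "coef u v t = 0") (auto simp: sum.delta' dest: coef_len)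
qed


declare coef.simps(2)[simp del]

lemma sum_Mg_A:
  assumes "isA x"
  shows "(\<Sum>t'\<in>words (length t - 1). Mg x t' t * X t') = (case t of [] \<Rightarrow> 0 | a # r \<Rightarrow> if a = x then X r else 0)"
proof (cases t)
  case Nil then show ?thesis using assms by (simp add: Mg_def)
next
  case (Cons a r)
  have "(\<Sum>t'\<in>words (length t - 1). Mg x t' t * X t') = (\<Sum>t'\<in>words (length r). if t' = r then (if a = x then X r else 0) else 0)"
    using assms Cons by (intro sum.cong) (auto simp: Mg_def)
  then show ?thesis using Cons by (simp add: sum.delta')
qed

lemma coef_pair: "coef [a, b] v t = (\<Sum>t'\<in>words (length t - 1). Mg a t' t * Mg b v t')"
  by (subst coef.simps(2)) (simp only: coef_single)

lemma coefAB: "isA a \<Longrightarrow> coef [a, b] v t = (case t of [] \<Rightarrow> 0 | c # r \<Rightarrow> if c = a then Mg b v r else 0)"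
  unfolding coef_pair by (rule sum_Mg_A)

lemma coefAA: "isA a \<Longrightarrow> isA b \<Longrightarrow> coef [a, b] v t = (if t = a # b # v then 1 else 0)"
  by (simp add: coefAB Mg_def split: list.split)

lemma coefBA: "isA x \<Longrightarrow> \<not> isA y \<Longrightarrow> coef [y, x] v t = My y (x # v) t"
proof -
  assume x: "isA x" and y: "\<not> isA y"
  have "coef [y, x] v t = (\<Sum>t'\<in>words (length t - 1). Mg y t' t * (if t' = x # v then 1 else 0))"
    unfolding coef_pair using x by (intro sum.cong) (auto simp: Mg_def)
  also have "\<dots> = Mg y (x # v) t"
    by (cases "Mg y (x # v) t = 0") (auto simp: sum_delta_words dest: Mg_len)
  finally show ?thesis using y by (simp add: Mg_def)
qed

lemma fa_gen_mult: "fa_mult (fa_gen a) (fa_gen b) = fa_mono [a, b]"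
  by (simp add: fa_gen_def fa_mult_mono_mono)

lemma rel_killed: "r \<in> X_rels \<Longrightarrow> Psi r v t = 0"
  unfolding X_rels_def
  by (auto simp: fa_comm_def fa_gen_mult fa_mult_sub_left fa_mult_sub_right Psi_sub Psi_add Psi_mono
      coefAA coefAB coefBA Mg_def Dt_def split: list.split)

lemma ideal_killed: "a \<in> X_ideal \<Longrightarrow> Psi a v t = 0"
proof (induction a arbitrary: v t rule: X_ideal.induct)
  case (rel r) then show ?case by (rule rel_killed)
next
  case zero then show ?case by (rule Psi_zero)
next
  case (add a b) then show ?case by (simp add: Psi_add)
next
  case (smult a c) then show ?case by (simp add: Psi_smult)
next
  case (lmult a u) then show ?case by (simp add: Psi_left)
next
  case (rmult a u) then show ?case by (simp add: Psi_right)
qed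


definition supported :: "fa \<Rightarrow> gen set \<Rightarrow> bool" where
  "supported F A \<longleftrightarrow> (\<forall>s. F s \<noteq> 0 \<longrightarrow> set s \<subseteq> A)"

lemma fa_gen_left: "fa_mult (fa_gen g) X t = (case t of [] \<Rightarrow> 0 | a # r \<Rightarrow> if a = g then X r else 0)"
  by (cases t) (auto simp: fa_gen_def fa_mult_mono_left)

lemma fa_gen_right: "fa_mult X (fa_gen g) t = (if t \<noteq> [] \<and> last t = g then X (butlast t) else 0)"
  by (cases t rule: rev_cases) (auto simp: fa_gen_def fa_mult_mono_right)

lemma supported_one: "supported fa_one A"
  by (simp add: supported_def fa_one_def)

lemma supported_alpha_gen: "supported F A \<Longrightarrow> g \<in> A \<Longrightarrow> supported (alpha_gen g F) A"
proof -
  assume F: "supported F A" and g: "g \<in> A"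
  have L: "supported (fa_mult (fa_gen g) F) A"
    using F g unfolding supported_def fa_gen_left by (auto split: list.splits if_splits)
  have R: "supported (fa_mult F (fa_gen g)) A"
    unfolding supported_def fa_gen_right
  proof (intro allI impI)
    fix s assume "(if s \<noteq> [] \<and> last s = g then F (butlast s) else 0) \<noteq> 0"
    then have "s \<noteq> []" "last s = g" "F (butlast s) \<noteq> 0" by (auto split: if_splits)
    then have "set (butlast s) \<subseteq> A" "last s \<in> A" using F g by (auto simp: supported_def)
    then show "set s \<subseteq> A" using \<open>s \<noteq> []\<close> by (metis append_butlast_last_id set_append Un_subset_iff
        empty_set insert_subset list.simps(15) empty_subsetI)
  qed
  have S: "supported p A \<Longrightarrow> supported q A \<Longrightarrow> supported (fa_sub p q) A" for p q
    unfolding supported_def fa_sub_def by (metis diff_zero diff_self)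
  show ?thesis using L R S
    by (cases g) (auto simp: fa_comm_def)
qed

lemma supported_alpha: "set W \<subseteq> A \<Longrightarrow> supported F A \<Longrightarrow> supported (alpha W F) A"
  by (induction W) (auto intro: supported_alpha_gen)

lemma My_Z1pow: "set s \<subseteq> {Z2, Z22} \<Longrightarrow>
    My y (replicate k Z1 @ s) t = (if t = replicate k Z1 @ y # s then 1 else 0)"
proof (induction k arbitrary: t)
  case 0 then show ?case by (cases s) auto
next
  case (Suc k)
  have "Dt y Z1 (replicate k Z1 @ s) t = 0"
    by (cases y) (auto simp: Dt_def split: list.split)
  then show ?case using Suc by (auto split: list.split)
qed

lemma coef_B: "set s \<subseteq> {Z2, Z22} \<Longrightarrow>
    coef s (replicate k Z1) t = (if t = replicate k Z1 @ s then 1 else 0)"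
proof (induction s arbitrary: t)
  case Nil then show ?case by simp
next
  case (Cons y s)
  then have y: "\<not> isA y" and s: "set s \<subseteq> {Z2, Z22}" by auto
  have "coef (y # s) (replicate k Z1) t = (\<Sum>t'\<in>words (length t - 1). Mg y t' t * (if t' = replicate k Z1 @ s then 1 else 0))"
    by (simp add: coef.simps(2) Cons.IH[OF s])
  also have "\<dots> = (if length (replicate k Z1 @ s) = length t - 1 then Mg y (replicate k Z1 @ s) t else 0)"
    by (rule sum_delta_words)
  also have "\<dots> = (if t = replicate k Z1 @ (y # s) then 1 else 0)"
    using y s by (auto simp: Mg_def My_Z1pow)
  finally show ?case .
qed

lemma app_iff: "t = u @ s \<longleftrightarrow> (take (length u) t = u \<and> s = drop (length u) t)"
  by (metis append_eq_conv_conj)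

lemma Psi_B:
  assumes "supported F {Z2, Z22}"
  shows "Psi F (replicate k Z1) t = fa_mult (fa_mono (replicate k Z1)) F t"
proof -
  have "Psi F (replicate k Z1) t = (\<Sum>s\<in>words (length t - k). if s = drop k t then
      (if take k t = replicate k Z1 then F (drop k t) else 0) else 0)"
    unfolding Psi_def
  proof (rule sum.cong)
    show "words (length t - length (replicate k Z1)) = words (length t - k)" by simp
  next
    fix s
    show "F s * coef s (replicate k Z1) t = (if s = drop k t then (if take k t = replicate k Z1 then F (drop k t) else 0) else 0)"
    proof (cases "F s = 0")
      case False
      then have "set s \<subseteq> {Z2, Z22}" using assms by (auto simp: supported_def)
      then have "coef s (replicate k Z1) t = (if take k t = replicate k Z1 \<and> s = drop k t then 1 else 0)"
        using app_iff[of t "replicate k Z1" s] by (simp add: coef_B)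
      then show ?thesis by auto
    next
      case True
      then show ?thesis by auto
    qed
  qed
  also have "\<dots> = fa_mult (fa_mono (replicate k Z1)) F t"
    by (simp add: sum.delta' fa_mult_mono_left)
  finally show ?thesis .
qed

lemma Psi_genA: "isA g \<Longrightarrow> Psi (fa_mult (fa_gen g) F) v t = (case t of [] \<Rightarrow> 0 | a # r \<Rightarrow> if a = g then Psi F v r else 0)"
  unfolding fa_gen_def Psi_left using sum_Mg_A[of g t "Psi F v"] by (simp add: coef_single)

lemma Psi_genA_right: "isA g \<Longrightarrow> Psi (fa_mult F (fa_gen g)) v t = Psi F (g # v) t"
proof -
  assume g: "isA g"
  have "Psi (fa_mult F (fa_gen g)) v t = (\<Sum>t'\<in>words (Suc (length v)). Psi F t' t * (if t' = g # v then 1 else 0))"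
    unfolding fa_gen_def Psi_right using g by (intro sum.cong) (auto simp: coef_single Mg_def)
  then show ?thesis by (simp add: sum_delta_words)
qed

lemma step_alg: "fa_mult (fa_mult (fa_comm (fa_gen Z1) a) (fa_mono (replicate k Z1))) G =
   fa_sub (fa_mult (fa_gen Z1) (fa_mult (fa_mult a (fa_mono (replicate k Z1))) G))
          (fa_mult (fa_mult a (fa_mono (replicate (Suc k) Z1))) G)"
proof -
  have m: "fa_mono (replicate (Suc k) Z1) = fa_mult (fa_gen Z1) (fa_mono (replicate k Z1))"
    by (simp add: fa_gen_def fa_mult_mono_mono)
  show ?thesis unfolding m by (simp add: fa_comm_def fa_mult_sub_left fa_mult_assoc)
qed

lemma Psi_alpha:
  assumes "set W \<subseteq> {Z1, Z11, Z12}" "supported G {Z2, Z22}"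
  shows "Psi (alpha W G) (replicate k Z1) t = fa_mult (fa_mult (alpha W fa_one) (fa_mono (replicate k Z1))) G t"
  using assms(1)
proof (induction W arbitrary: k t)
  case Nil then show ?case using assms(2) by (simp add: Psi_B)
next
  case (Cons g W)
  then have IH: "\<And>k t. Psi (alpha W G) (replicate k Z1) t = fa_mult (fa_mult (alpha W fa_one) (fa_mono (replicate k Z1))) G t"
    and g: "g \<in> {Z1, Z11, Z12}" by auto
  show ?case
  proof (cases "g = Z1")
    case True
    have "Psi (alpha (g # W) G) (replicate k Z1) t =
        (case t of [] \<Rightarrow> 0 | a # r \<Rightarrow> if a = Z1 then Psi (alpha W G) (replicate k Z1) r else 0)
        - Psi (alpha W G) (replicate (Suc k) Z1) t"
      using True by (simp add: fa_comm_def Psi_sub Psi_genA Psi_genA_right)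
    also have "\<dots> = fa_mult (fa_mult (alpha (g # W) fa_one) (fa_mono (replicate k Z1))) G t"
      using True by (simp only: IH alpha.simps alpha_gen.simps step_alg) (simp add: fa_sub_def fa_gen_left)
    finally show ?thesis .
  next
    case False
    then have gA: "isA g" "alpha_gen g F = fa_mult (fa_gen g) F" for F using g by auto
    have "Psi (alpha (g # W) G) (replicate k Z1) t = (case t of [] \<Rightarrow> 0 | a # r \<Rightarrow> if a = g then Psi (alpha W G) (replicate k Z1) r else 0)"
      by (simp only: alpha.simps gA(2) Psi_genA[OF gA(1)])
    also have "\<dots> = fa_mult (fa_gen g) (fa_mult (fa_mult (alpha W fa_one) (fa_mono (replicate k Z1))) G) t"
      by (simp only: IH fa_gen_left)
    also have "\<dots> = fa_mult (fa_mult (alpha (g # W) fa_one) (fa_mono (replicate k Z1))) G t"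
      by (simp only: alpha.simps gA(2) fa_mult_assoc)
    finally show ?thesis .
  qed
qed

lemma Psi_elemU:
  assumes "set W1 \<subseteq> {Z1, Z11, Z12}" "set W2 \<subseteq> {Z2, Z22}"
  shows "Psi (elemU (W1, W2)) [] t = fa_mult (alpha W1 fa_one) (alpha W2 fa_one) t"
proof -
  have "supported (alpha W2 fa_one) {Z2, Z22}"
    using assms(2) by (intro supported_alpha supported_one)
  from Psi_alpha[OF assms(1) this, of 0 t] show ?thesis
    by (simp add: elemU_def fa_one_mono[symmetric])
qed


definition indep :: "'i set \<Rightarrow> ('i \<Rightarrow> gen list \<Rightarrow> complex) \<Rightarrow> bool" where
  "indep J f \<longleftrightarrow> (\<forall>S c. finite S \<longrightarrow> S \<subseteq> J \<longrightarrow> (\<forall>t. (\<Sum>p\<in>S. c p * f p t) = 0) \<longrightarrow> (\<forall>p\<in>S. c p = 0))"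

lemma indep_triangular:
  fixes f :: "'i \<Rightarrow> gen list \<Rightarrow> complex" and r :: "'i \<Rightarrow> 'k::linorder" and key :: "'i \<Rightarrow> gen list"
  assumes inj: "inj_on r J"
    and diag: "\<And>W. W \<in> J \<Longrightarrow> f W (key W) = 1"
    and tri: "\<And>W W'. W \<in> J \<Longrightarrow> W' \<in> J \<Longrightarrow> f W' (key W) \<noteq> 0 \<Longrightarrow> r W' \<le> r W"
  shows "indep J f"
  unfolding indep_def
proof (intro allI impI ballI)
  fix S c p
  assume S: "finite S" "S \<subseteq> J" and eq: "\<forall>t. (\<Sum>p\<in>S. c p * f p t) = 0" and p: "p \<in> S"
  show "c p = 0"
  proof (rule ccontr)
    assume cp: "c p \<noteq> 0"
    define T where "T = {q\<in>S. c q \<noteq> 0}"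
    have T: "finite T" "T \<noteq> {}" using S p cp by (auto simp: T_def)
    define m where "m = Min (r ` T)"
    have "m \<in> r ` T" unfolding m_def using T by (intro Min_in) auto
    then obtain W where W: "W \<in> T" "r W = m" by auto
    have min: "q \<in> T \<Longrightarrow> r W \<le> r q" for q using T W unfolding m_def by auto
    have "(\<Sum>q\<in>S. c q * f q (key W)) = c W * f W (key W) + (\<Sum>q\<in>S - {W}. c q * f q (key W))"
      using S W by (auto simp: T_def intro: sum.remove)
    also have "(\<Sum>q\<in>S - {W}. c q * f q (key W)) = 0"
    proof (rule sum.neutral, intro ballI)
      fix q assume q: "q \<in> S - {W}"
      show "c q * f q (key W) = 0"
      proof (rule ccontr)
        assume "c q * f q (key W) \<noteq> 0"
        then have "c q \<noteq> 0" "f q (key W) \<noteq> 0" by auto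
        then have "q \<in> T" "r q \<le> r W" using q S W tri[of W q] by (auto simp: T_def)
        moreover have "r W \<le> r q" using min \<open>q \<in> T\<close> by blast
        moreover have "r q \<noteq> r W" using inj q S W by (auto simp: T_def inj_on_def)
        ultimately show False by simp
      qed
    qed
    finally show False using eq diag W S by (auto simp: T_def)
  qed
qed

lemma supp_step:
  assumes "alpha_gen g F s \<noteq> 0"
  shows "(\<exists>r. s = g # r \<and> F r \<noteq> 0) \<or> (g \<in> {Z1, Z2} \<and> (\<exists>r. s = r @ [g] \<and> F r \<noteq> 0))"
proof -
  have L: "fa_mult (fa_gen g) F s \<noteq> 0 \<Longrightarrow> \<exists>r. s = g # r \<and> F r \<noteq> 0"
    by (auto simp: fa_gen_left split: list.splits if_splits)
  have R: "fa_mult F (fa_gen g) s \<noteq> 0 \<Longrightarrow> \<exists>r. s = r @ [g] \<and> F r \<noteq> 0"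
    by (auto simp: fa_gen_right split: if_splits intro!: exI[of _ "butlast s"])
  show ?thesis
  proof (cases "g \<in> {Z1, Z2}")
    case True
    then have "alpha_gen g F s = fa_mult (fa_gen g) F s - fa_mult F (fa_gen g) s"
      by (auto simp: fa_comm_def fa_sub_def)
    then have "fa_mult (fa_gen g) F s \<noteq> 0 \<or> fa_mult F (fa_gen g) s \<noteq> 0" using assms by auto
    then show ?thesis using L R True by blast
  next
    case False
    then have "alpha_gen g F s = fa_mult (fa_gen g) F s" by (cases g) auto
    then show ?thesis using L assms by auto
  qed
qed

lemma homog: "alpha W fa_one s \<noteq> 0 \<Longrightarrow> length s = length W"
proof (induction W arbitrary: s)
  case Nil then show ?case by (simp add: fa_one_def split: if_splits)
next
  case (Cons g W)
  from supp_step[of g "alpha W fa_one" s] Cons.prems show ?case using Cons.IH by auto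
qed

fun gidx :: "gen \<Rightarrow> nat" where
  "gidx Z1 = 0" | "gidx Z11 = 1" | "gidx Z2 = 2" | "gidx Z22 = 3" | "gidx Z12 = 4"

definition rkz :: "gen \<Rightarrow> gen \<Rightarrow> nat" where "rkz z g = (if g = z then 0 else Suc (gidx g))"

lemma inj_rkz: "inj (rkz z)"
proof (rule injI)
  fix a b assume "rkz z a = rkz z b"
  then show "a = b" by (cases a; cases b; cases z) (auto simp: rkz_def split: if_splits)
qed

lemma key_lex: "length xs = length ys \<Longrightarrow> ys \<le> xs \<Longrightarrow> (\<exists>y\<in>set ys. y \<noteq> 0) \<Longrightarrow> (0::nat) # ys < xs @ [0]"
proof (induction xs arbitrary: ys)
  case Nil then show ?case by simp
next
  case (Cons x xs)
  then obtain y ys' where ys: "ys = y # ys'" by (cases ys) auto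
  show ?case
  proof (cases "x = 0")
    case False then show ?thesis using ys by simp
  next
    case True
    then have "y = 0" "ys' \<le> xs" using Cons.prems ys by auto
    then have "0 # ys' < xs @ [0]" using Cons.IH[of ys'] Cons.prems ys by auto
    then show ?thesis using ys True \<open>y = 0\<close> by simp
  qed
qed

lemma alpha_tri:
  assumes z: "z \<in> {Z1, Z2}" and M: "M \<inter> {Z1, Z2} = {}"
  shows "set W \<subseteq> insert z M \<Longrightarrow> (W = [] \<or> last W \<noteq> z) \<Longrightarrow> alpha W fa_one s \<noteq> 0
     \<Longrightarrow> map (rkz z) W \<le> map (rkz z) s"
proof (induction W arbitrary: s)
  case Nil then show ?case by (simp add: fa_one_def split: if_splits)
next
  case (Cons g W)
  have W: "set W \<subseteq> insert z M" "W = [] \<or> last W \<noteq> z" using Cons.prems by (auto split: if_splits)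
  have "(\<exists>r. s = g # r \<and> alpha W fa_one r \<noteq> 0) \<or> (g \<in> {Z1, Z2} \<and> (\<exists>r. s = r @ [g] \<and> alpha W fa_one r \<noteq> 0))"
    using supp_step[of g "alpha W fa_one" s] Cons.prems(3) by simp
  then show ?case
  proof (elim disjE exE conjE)
    fix r assume "s = g # r" "alpha W fa_one r \<noteq> 0"
    then show ?thesis using Cons.IH[OF W] by simp
  next
    fix r assume g: "g \<in> {Z1, Z2}" and s: "s = r @ [g]" and r: "alpha W fa_one r \<noteq> 0"
    have gz: "g = z" using g Cons.prems(1) M by auto
    have "W \<noteq> []" using Cons.prems(2) gz by auto
    then have lW: "last W \<noteq> z" using Cons.prems(2) by auto
    have "map (rkz z) W \<le> map (rkz z) r" using Cons.IH[OF W r] .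
    moreover have "length r = length W" using homog[OF r] .
    moreover have "\<exists>y\<in>set (map (rkz z) W). y \<noteq> 0"
    proof
      show "rkz z (last W) \<in> set (map (rkz z) W)" using \<open>W \<noteq> []\<close> by simp
      show "rkz z (last W) \<noteq> 0" using lW by (simp add: rkz_def)
    qed
    ultimately have "0 # map (rkz z) W < map (rkz z) r @ [0]"
      by (intro key_lex) auto
    moreover have "rkz z z = 0" by (simp add: rkz_def)
    ultimately show ?thesis using s gz by (simp add: order.strict_implies_order)
  qed
qed

lemma alpha_diag:
  assumes z: "z \<in> {Z1, Z2}" and M: "M \<inter> {Z1, Z2} = {}"
  shows "set W \<subseteq> insert z M \<Longrightarrow> (W = [] \<or> last W \<noteq> z) \<Longrightarrow> alpha W fa_one W = 1"
proof (induction W)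
  case Nil then show ?case by (simp add: fa_one_def)
next
  case (Cons g W)
  have W: "set W \<subseteq> insert z M" "W = [] \<or> last W \<noteq> z" using Cons.prems by (auto split: if_splits)
  note IH = Cons.IH[OF W]
  show ?case
  proof (cases "g = z")
    case True
    have "W \<noteq> []" using Cons.prems(2) True by auto
    then have "last (g # W) \<noteq> g" using Cons.prems(2) True by auto
    then show ?thesis using True z IH
      by (auto simp: fa_comm_def fa_sub_def fa_gen_left fa_gen_right)
  next
    case False
    then have "g \<in> M" using Cons.prems(1) by auto
    then have "g \<notin> {Z1, Z2}" using M by auto
    then have "alpha_gen g F = fa_mult (fa_gen g) F" for F by (cases g) auto
    then show ?thesis using IH by (simp add: fa_gen_left)
  qed
qed

lemma indep_alpha:
  assumes z: "z \<in> {Z1, Z2}" and M: "M \<inter> {Z1, Z2} = {}"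
  shows "indep (W0 (insert z M)) (\<lambda>W. alpha W fa_one)"
proof (rule indep_triangular[where r="map (rkz z)" and key="\<lambda>W. W"])
  show "inj_on (map (rkz z)) (W0 (insert z M))"
    using inj_rkz by (meson inj_mapI inj_on_subset subset_UNIV)
  show "alpha W fa_one W = 1" if "W \<in> W0 (insert z M)" for W
    using that z by (intro alpha_diag[OF z M]) (auto simp: W0_def)
  show "map (rkz z) W' \<le> map (rkz z) W"
    if "W \<in> W0 (insert z M)" "W' \<in> W0 (insert z M)" "alpha W' fa_one W \<noteq> 0" for W W'
    using that z by (intro alpha_tri[OF z M]) (auto simp: W0_def)
qed


lemma fa_mult_split:
  assumes a: "supported a A" and G: "supported G B" and AB: "A \<inter> B = {}"
    and u: "set u \<subseteq> A" and v: "set v \<subseteq> B"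
  shows "fa_mult a G (u @ v) = a u * G v"
proof -
  have "fa_mult a G (u @ v) = (\<Sum>i\<le>length (u @ v). if i = length u then a u * G v else 0)"
    unfolding fa_mult_def
  proof (rule sum.cong[OF refl])
    fix i assume i: "i \<in> {..length (u @ v)}"
    show "a (take i (u @ v)) * G (drop i (u @ v)) = (if i = length u then a u * G v else 0)"
    proof (cases "i = length u")
      case True then show ?thesis by simp
    next
      case False
      show ?thesis
      proof (cases "i < length u")
        case True
        have d: "drop i (u @ v) = drop i u @ v" "drop i u \<noteq> []" using True by auto
        have "hd (drop i u) \<in> set (drop i (u @ v))" using d by simp
        moreover have "hd (drop i u) \<in> A" using d u set_drop_subset[of i u] hd_in_set[of "drop i u"] by blast
        ultimately have "\<not> set (drop i (u @ v)) \<subseteq> B" using AB by blast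
        then have "G (drop i (u @ v)) = 0" using G unfolding supported_def by blast
        then show ?thesis using False by simp
      next
        case False2: False
        then have i2: "length u < i" "i \<le> length u + length v" using False i by auto
        have tk: "take i (u @ v) = u @ take (i - length u) v" "take (i - length u) v \<noteq> []" "v \<noteq> []"
          using i2 by auto
        have "hd (take (i - length u) v) \<in> set (take (i - length u) v)" using tk by (rule_tac hd_in_set) 
        then have "hd v \<in> set (take i (u @ v))" using tk i2 by simp
        moreover have "hd v \<in> B" using v tk by auto
        ultimately have "\<not> set (take i (u @ v)) \<subseteq> A" using AB by blast
        then have "a (take i (u @ v)) = 0" using a unfolding supported_def by blast
        then show ?thesis using False by simp
      qed
    qed
  qed
  then show ?thesis by (simp add: sum.delta)
qed

lemma indepD: "indep J f \<Longrightarrow> finite S \<Longrightarrow> S \<subseteq> J \<Longrightarrow> (\<And>t. (\<Sum>p\<in>S. c p * f p t) = 0) \<Longrightarrow> p \<in> S \<Longrightarrow> c p = 0"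
  unfolding indep_def by blast

lemma indep_tensor:
  assumes f: "indep J1 f" and g: "indep J2 g"
    and fs: "\<And>p. p \<in> J1 \<Longrightarrow> supported (f p) A" and gs: "\<And>q. q \<in> J2 \<Longrightarrow> supported (g q) B"
    and h: "\<And>p q u v. p \<in> J1 \<Longrightarrow> q \<in> J2 \<Longrightarrow> set u \<subseteq> A \<Longrightarrow> set v \<subseteq> B \<Longrightarrow> h (p, q) (u @ v) = f p u * g q v"
  shows "indep (J1 \<times> J2) h"
  unfolding indep_def
proof (intro allI impI ballI)
  fix S c x
  assume S: "finite S" "S \<subseteq> J1 \<times> J2" and eq: "\<forall>t. (\<Sum>p\<in>S. c p * h p t) = 0" and x: "x \<in> S"
  define S1 where "S1 = fst ` S"
  define S2 where "S2 = snd ` S"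
  define c' where "c' p q = (if (p, q) \<in> S then c (p, q) else 0)" for p q
  have S12a: "finite S1" "finite S2" "S1 \<subseteq> J1" "S2 \<subseteq> J2"
    using S by (auto simp: S1_def S2_def)
  have "S \<subseteq> S1 \<times> S2" unfolding S1_def S2_def by (rule subset_fst_snd)
  note S12 = S12a this
  have key: "(\<Sum>q\<in>S2. (\<Sum>p\<in>S1. c' p q * f p u) * g q v) = 0" if u: "set u \<subseteq> A" and v: "set v \<subseteq> B" for u v
  proof -
    have "0 = (\<Sum>y\<in>S. c y * h y (u @ v))" using eq by simp
    also have "\<dots> = (\<Sum>y\<in>S1 \<times> S2. c' (fst y) (snd y) * h y (u @ v))"
      using S12 by (intro sum.mono_neutral_cong_left) (auto simp: c'_def)
    also have "\<dots> = (\<Sum>p\<in>S1. \<Sum>q\<in>S2. c' p q * h (p, q) (u @ v))"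
      by (simp add: sum.cartesian_product split_def)
    also have "\<dots> = (\<Sum>p\<in>S1. \<Sum>q\<in>S2. c' p q * f p u * g q v)"
    proof (intro sum.cong refl)
      fix p q assume "p \<in> S1" "q \<in> S2"
      then have "p \<in> J1" "q \<in> J2" using S12 by auto
      then show "c' p q * h (p, q) (u @ v) = c' p q * f p u * g q v" by (simp add: h[OF _ _ u v] mult.assoc)
    qed
    also have "\<dots> = (\<Sum>q\<in>S2. \<Sum>p\<in>S1. c' p q * f p u * g q v)"
      by (rule sum.swap)
    also have "\<dots> = (\<Sum>q\<in>S2. (\<Sum>p\<in>S1. c' p q * f p u) * g q v)"
      by (simp add: sum_distrib_right)
    finally show ?thesis by simp
  qed
  have key2: "(\<Sum>p\<in>S1. c' p q * f p u) = 0" if q: "q \<in> S2" for q u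
  proof (cases "set u \<subseteq> A")
    case True
    have "\<forall>v. (\<Sum>q\<in>S2. (\<Sum>p\<in>S1. c' p q * f p u) * g q v) = 0"
    proof
      fix v show "(\<Sum>q\<in>S2. (\<Sum>p\<in>S1. c' p q * f p u) * g q v) = 0"
      proof (cases "set v \<subseteq> B")
        case True then show ?thesis using key \<open>set u \<subseteq> A\<close> by blast
      next
        case False
        then have "\<And>q. q \<in> S2 \<Longrightarrow> g q v = 0" using gs S12 unfolding supported_def by blast
        then show ?thesis by simp
      qed
    qed
    then show ?thesis using indepD[OF g S12(2) S12(4), where c="\<lambda>q. \<Sum>p\<in>S1. c' p q * f p u", OF _ q] by blast
  next
    case False
    then have "\<And>p. p \<in> S1 \<Longrightarrow> f p u = 0" using fs S12 unfolding supported_def by blast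
    then show ?thesis by simp
  qed
  obtain p0 q0 where x0: "x = (p0, q0)" by (cases x)
  have "q0 \<in> S2" "p0 \<in> S1" using x x0 unfolding S1_def S2_def by (metis fst_conv snd_conv image_eqI)+
  then have "\<forall>u. (\<Sum>p\<in>S1. c' p q0 * f p u) = 0" using key2 by blast
  then have "c' p0 q0 = 0" using indepD[OF f S12(1) S12(3), where c="\<lambda>p. c' p q0", OF _ \<open>p0 \<in> S1\<close>] by blast
  then show "c x = 0" using x x0 by (simp add: c'_def)
qed


lemma conj1: "lin_indep_U (W0 {Z1, Z11, Z12} \<times> W0 {Z2, Z22}) elemU"
  unfolding lin_indep_U_def
proof (intro allI impI ballI)
  fix S c p
  assume S: "finite S" "S \<subseteq> W0 {Z1, Z11, Z12} \<times> W0 {Z2, Z22}"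
    and I: "(\<lambda>w. \<Sum>p\<in>S. c p * elemU p w) \<in> X_ideal" and p: "p \<in> S"
  let ?h = "\<lambda>p. fa_mult (alpha (fst p) fa_one) (alpha (snd p) fa_one)"
  have ind: "indep (W0 (insert Z1 {Z11, Z12}) \<times> W0 (insert Z2 {Z22})) ?h"
  proof (rule indep_tensor[where A="{Z1, Z11, Z12}" and B="{Z2, Z22}"])
    show "indep (W0 (insert Z1 {Z11, Z12})) (\<lambda>W. alpha W fa_one)" by (rule indep_alpha) auto
    show "indep (W0 (insert Z2 {Z22})) (\<lambda>W. alpha W fa_one)" by (rule indep_alpha) auto
    show "supported (alpha W fa_one) {Z1, Z11, Z12}" if "W \<in> W0 (insert Z1 {Z11, Z12})" for W
      using that by (intro supported_alpha supported_one) (auto simp: W0_def)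
    show "supported (alpha W fa_one) {Z2, Z22}" if "W \<in> W0 (insert Z2 {Z22})" for W
      using that by (intro supported_alpha supported_one) (auto simp: W0_def)
    show "fa_mult (alpha (fst (p, q)) fa_one) (alpha (snd (p, q)) fa_one) (u @ v) = alpha p fa_one u * alpha q fa_one v"
      if "p \<in> W0 (insert Z1 {Z11, Z12})" "q \<in> W0 (insert Z2 {Z22})" "set u \<subseteq> {Z1, Z11, Z12}" "set v \<subseteq> {Z2, Z22}"
      for p q u v
      using that unfolding fst_conv snd_conv by (intro fa_mult_split supported_alpha supported_one) (auto simp: W0_def)
  qed
  have eq0: "\<forall>t. (\<Sum>p\<in>S. c p * ?h p t) = 0"
  proof
    fix t
    have "0 = Psi (\<lambda>w. \<Sum>p\<in>S. c p * elemU p w) [] t" using ideal_killed[OF I] by simp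
    also have "\<dots> = (\<Sum>p\<in>S. c p * Psi (elemU p) [] t)" by (rule Psi_lincomb)
    also have "\<dots> = (\<Sum>p\<in>S. c p * ?h p t)"
    proof (rule sum.cong[OF refl])
      fix q assume "q \<in> S"
      then have "fst q \<in> W0 {Z1, Z11, Z12}" "snd q \<in> W0 {Z2, Z22}" using S by (auto simp: mem_Times_iff)
      then have "set (fst q) \<subseteq> {Z1, Z11, Z12}" "set (snd q) \<subseteq> {Z2, Z22}" by (simp_all add: W0_def)
      then show "c q * Psi (elemU q) [] t = c q * ?h q t"
        using Psi_elemU[of "fst q" "snd q" t] by simp
    qed
    finally show "(\<Sum>p\<in>S. c p * ?h p t) = 0" by simp
  qed
  show "c p = 0" using indepD[OF ind S(1) S(2), where c=c, OF _ p] eq0 by blast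
qed

fun sg :: "gen \<Rightarrow> gen" where
  "sg Z1 = Z2" | "sg Z2 = Z1" | "sg Z11 = Z22" | "sg Z22 = Z11" | "sg Z12 = Z12"

lemma sg_sg[simp]: "sg (sg g) = g" by (cases g) auto

lemma sg_o_sg[simp]: "sg \<circ> sg = id" by (rule ext) simp

lemma map_sg_sg[simp]: "map sg (map sg w) = w" by simp

lemma map_sg_eq: "(map sg w = u) = (w = map sg u)" by auto

definition fmap :: "fa \<Rightarrow> fa" where "fmap F = (\<lambda>w. F (map sg w))"

lemma fmap_mult: "fmap (fa_mult p q) = fa_mult (fmap p) (fmap q)"
  by (simp add: fun_eq_iff fmap_def fa_mult_def take_map drop_map)

lemma fmap_mono: "fmap (fa_mono u) = fa_mono (map sg u)"
  by (auto simp: fun_eq_iff fmap_def fa_mono_def)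

lemma fmap_gen: "fmap (fa_gen g) = fa_gen (sg g)"
  by (simp add: fa_gen_def fmap_mono)

lemma fmap_one: "fmap fa_one = fa_one"
  by (simp add: fa_one_mono fmap_mono)

lemma fmap_sub: "fmap (fa_sub p q) = fa_sub (fmap p) (fmap q)"
  by (simp add: fun_eq_iff fmap_def fa_sub_def)

lemma fmap_add: "fmap (fa_add p q) = fa_add (fmap p) (fmap q)"
  by (simp add: fun_eq_iff fmap_def fa_add_def)

lemma fmap_smult: "fmap (fa_smult c p) = fa_smult c (fmap p)"
  by (simp add: fun_eq_iff fmap_def fa_smult_def)

lemma fmap_comm: "fmap (fa_comm p q) = fa_comm (fmap p) (fmap q)"
  by (simp add: fa_comm_def fmap_sub fmap_mult)

lemma fmap_alpha_gen: "fmap (alpha_gen g F) = alpha_gen (sg g) (fmap F)"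
  by (cases g) (simp_all add: fmap_comm fmap_mult fmap_gen)

lemma fmap_alpha: "fmap (alpha W F) = alpha (map sg W) (fmap F)"
  by (induction W) (simp_all add: fmap_alpha_gen)

lemma fmap_elemU: "fmap (elemU p) = elemU (map sg (fst p), map sg (snd p))"
  by (simp add: elemU_def fmap_alpha fmap_one)

lemma ideal_sub: "a \<in> X_ideal \<Longrightarrow> b \<in> X_ideal \<Longrightarrow> fa_add a (fa_smult (-1) b) \<in> X_ideal"
  by (intro X_ideal.add X_ideal.smult)

lemma comm_gen: "fa_comm (fa_gen a) (fa_gen b) = fa_sub (fa_mono [a, b]) (fa_mono [b, a])"
  by (simp add: fa_comm_def fa_gen_mult)

lemma comm_sub_gen: "fa_comm (fa_sub (fa_gen a) (fa_gen b)) (fa_gen c) =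
   fa_sub (fa_sub (fa_mono [a, c]) (fa_mono [b, c])) (fa_sub (fa_mono [c, a]) (fa_mono [c, b]))"
  by (simp add: fa_comm_def fa_gen_mult fa_mult_sub_left fa_mult_sub_right)

lemmas fexp = comm_gen comm_sub_gen fmap_comm fmap_sub fmap_gen fmap_mono fmap_add
lemmas fdefs = fa_sub_def fa_add_def fa_smult_def

lemma fmap_rel: "r \<in> X_rels \<Longrightarrow> fmap r \<in> X_ideal"
proof -
  define R1 where "R1 = fa_comm (fa_gen Z1) (fa_gen Z2)"
  define R2 where "R2 = fa_comm (fa_gen Z11) (fa_gen Z2)"
  define R3 where "R3 = fa_comm (fa_gen Z1) (fa_gen Z22)"
  define R4 where "R4 = fa_add (fa_comm (fa_gen Z11) (fa_gen Z22)) (fa_comm (fa_gen Z11) (fa_gen Z12))"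
  define R5 where "R5 = fa_add (fa_comm (fa_gen Z11) (fa_gen Z22)) (fa_comm (fa_sub (fa_gen Z1) (fa_gen Z2)) (fa_gen Z12))"
  define R6 where "R6 = fa_add (fa_comm (fa_gen Z22) (fa_gen Z12)) (fa_comm (fa_sub (fa_gen Z1) (fa_gen Z2)) (fa_gen Z12))"
  have X: "X_rels = {R1, R2, R3, R4, R5, R6}"
    unfolding X_rels_def R1_def R2_def R3_def R4_def R5_def R6_def ..
  have I: "R \<in> X_ideal" if "R \<in> {R1, R2, R3, R4, R5, R6}" for R
    using that X by (auto intro: X_ideal.rel)
  have r1: "R1 = (fa_sub (fa_mono [Z1, Z2]) (fa_mono [Z2, Z1]))" unfolding R1_def by (simp add: comm_gen)
  have r2: "R2 = (fa_sub (fa_mono [Z11, Z2]) (fa_mono [Z2, Z11]))" unfolding R2_def by (simp add: comm_gen)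
  have r3: "R3 = (fa_sub (fa_mono [Z1, Z22]) (fa_mono [Z22, Z1]))" unfolding R3_def by (simp add: comm_gen)
  have r4: "R4 = (fa_add (fa_sub (fa_mono [Z11, Z22]) (fa_mono [Z22, Z11])) (fa_sub (fa_mono [Z11, Z12]) (fa_mono [Z12, Z11])))" unfolding R4_def by (simp add: comm_gen)
  have r5: "R5 = (fa_add (fa_sub (fa_mono [Z11, Z22]) (fa_mono [Z22, Z11])) (fa_sub (fa_sub (fa_mono [Z1, Z12]) (fa_mono [Z2, Z12])) (fa_sub (fa_mono [Z12, Z1]) (fa_mono [Z12, Z2]))))" unfolding R5_def by (simp add: comm_gen comm_sub_gen)
  have r6: "R6 = (fa_add (fa_sub (fa_mono [Z22, Z12]) (fa_mono [Z12, Z22])) (fa_sub (fa_sub (fa_mono [Z1, Z12]) (fa_mono [Z2, Z12])) (fa_sub (fa_mono [Z12, Z1]) (fa_mono [Z12, Z2]))))" unfolding R6_def by (simp add: comm_gen comm_sub_gen)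
  note rr = r1 r2 r3 r4 r5 r6
  note fm = fmap_sub fmap_add fmap_mono
  have e1: "fmap R1 = fa_smult (-1) R1" unfolding rr by (simp only: fm list.map sg.simps) (simp add: fun_eq_iff fdefs)
  have e2: "fmap R2 = fa_smult (-1) R3" unfolding rr by (simp only: fm list.map sg.simps) (simp add: fun_eq_iff fdefs)
  have e3: "fmap R3 = fa_smult (-1) R2" unfolding rr by (simp only: fm list.map sg.simps) (simp add: fun_eq_iff fdefs)
  have e4: "fmap R4 = fa_add R6 (fa_smult (-1) R5)" unfolding rr by (simp only: fm list.map sg.simps) (simp add: fun_eq_iff fdefs)
  have e5: "fmap R5 = fa_smult (-1) R5" unfolding rr by (simp only: fm list.map sg.simps) (simp add: fun_eq_iff fdefs)
  have e6: "fmap R6 = fa_add R4 (fa_smult (-1) R5)" unfolding rr by (simp only: fm list.map sg.simps) (simp add: fun_eq_iff fdefs)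
  have i1: "R1 \<in> X_ideal" "R2 \<in> X_ideal" "R3 \<in> X_ideal" "R4 \<in> X_ideal" "R5 \<in> X_ideal" "R6 \<in> X_ideal"
    by (rule I, simp)+
  have f1: "fmap R1 \<in> X_ideal" unfolding e1 by (rule X_ideal.smult[OF i1(1)])
  have f2: "fmap R2 \<in> X_ideal" unfolding e2 by (rule X_ideal.smult[OF i1(3)])
  have f3: "fmap R3 \<in> X_ideal" unfolding e3 by (rule X_ideal.smult[OF i1(2)])
  have f4: "fmap R4 \<in> X_ideal" unfolding e4 by (rule ideal_sub[OF i1(6) i1(5)])
  have f5: "fmap R5 \<in> X_ideal" unfolding e5 by (rule X_ideal.smult[OF i1(5)])
  have f6: "fmap R6 \<in> X_ideal" unfolding e6 by (rule ideal_sub[OF i1(4) i1(5)])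
  assume "r \<in> X_rels"
  then have "r \<in> {R1, R2, R3, R4, R5, R6}" unfolding X .
  then show ?thesis using f1 f2 f3 f4 f5 f6 by (elim insertE emptyE) simp_all
qed

lemma fmap_ideal: "a \<in> X_ideal \<Longrightarrow> fmap a \<in> X_ideal"
proof (induction rule: X_ideal.induct)
  case (rel r) then show ?case by (rule fmap_rel)
next
  case zero then show ?case by (simp add: fmap_def fa_zero_def X_ideal.zero[unfolded fa_zero_def])
next
  case (add a b) then show ?case by (simp add: fmap_add X_ideal.add)
next
  case (smult a c) then show ?case by (simp add: fmap_smult X_ideal.smult)
next
  case (lmult a u) then show ?case by (simp add: fmap_mult fmap_mono X_ideal.lmult)
next
  case (rmult a u) then show ?case by (simp add: fmap_mult fmap_mono X_ideal.rmult)
qed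

definition phi :: "gen list \<times> gen list \<Rightarrow> gen list \<times> gen list" where
  "phi p = (map sg (fst p), map sg (snd p))"

lemma phi_phi[simp]: "phi (phi p) = p" by (simp add: phi_def)

lemma phi_W0: "p \<in> W0 {Z2, Z22, Z12} \<times> W0 {Z1, Z11} \<Longrightarrow> phi p \<in> W0 {Z1, Z11, Z12} \<times> W0 {Z2, Z22}"
proof -
  have s: "set (map sg w) \<subseteq> sg ` A" if "set w \<subseteq> A" for w :: "gen list" and A using that by auto
  have l: "w \<noteq> [] \<Longrightarrow> last (map sg w) = sg (last w)" for w by (simp add: last_map)
  assume "p \<in> W0 {Z2, Z22, Z12} \<times> W0 {Z1, Z11}"
  then show ?thesis unfolding W0_def phi_def mem_Times_iff
    by (auto simp: l) (metis (no_types, lifting) sg.simps gen.exhaust)+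
qed

lemma lin_indep_UD: "lin_indep_U J f \<Longrightarrow> finite S \<Longrightarrow> S \<subseteq> J \<Longrightarrow> (\<lambda>w. \<Sum>p\<in>S. c p * f p w) \<in> X_ideal \<Longrightarrow> p \<in> S \<Longrightarrow> c p = 0"
  unfolding lin_indep_U_def by blast

lemma conj2: "lin_indep_U (W0 {Z2, Z22, Z12} \<times> W0 {Z1, Z11}) elemU"
  unfolding lin_indep_U_def
proof (intro allI impI ballI)
  fix S c p
  assume S: "finite S" "S \<subseteq> W0 {Z2, Z22, Z12} \<times> W0 {Z1, Z11}"
    and I: "(\<lambda>w. \<Sum>p\<in>S. c p * elemU p w) \<in> X_ideal" and p: "p \<in> S"
  have inj: "inj_on phi S" by (metis inj_onI phi_phi)
  have "fmap (\<lambda>w. \<Sum>p\<in>S. c p * elemU p w) = (\<lambda>w. \<Sum>p\<in>S. c p * elemU (phi p) w)"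
    using fmap_elemU by (simp add: fun_eq_iff fmap_def phi_def)
  also have "\<dots> = (\<lambda>w. \<Sum>q\<in>phi ` S. c (phi q) * elemU q w)"
    by (simp add: sum.reindex[OF inj])
  finally have I': "(\<lambda>w. \<Sum>q\<in>phi ` S. c (phi q) * elemU q w) \<in> X_ideal"
    using fmap_ideal[OF I] by simp
  have S'1: "finite (phi ` S)" using S by simp
  have S'2: "phi ` S \<subseteq> W0 {Z1, Z11, Z12} \<times> W0 {Z2, Z22}"
  proof (rule image_subsetI)
    fix x assume "x \<in> S"
    then show "phi x \<in> W0 {Z1, Z11, Z12} \<times> W0 {Z2, Z22}" using S(2) phi_W0 by blast
  qed
  note S' = S'1 S'2
  have "phi p \<in> phi ` S" using p by simp
  then have "c (phi (phi p)) = 0"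
    by (rule lin_indep_UD[where c="\<lambda>q. c (phi q)", OF conj1 S'(1) S'(2) I'])
  then show "c p = 0" by simp
qed

theorem lemma7p5:
  shows "lin_indep_U (W0 {Z1, Z11, Z12} \<times> W0 {Z2, Z22}) elemU
       \<and> lin_indep_U (W0 {Z2, Z22, Z12} \<times> W0 {Z1, Z11}) elemU"
  using conj1 conj2 by blast


end
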